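(* For any $k\ge 2$ groups of agents with arbitrary monotonic utilities, there exists an allocation that is $1/k$-democratic EF2.
   Context: There is a finite set $G$ of goods and $k$ groups $A_1,\dots,A_k$ with $n_i\ge1$ agents in $A_i$. Each agent has a utility $u_a:2^G\to\mathbb{R}_{\ge0}$ that is monotone ($X\subseteq Y\Rightarrow u_a(X)\le u_a(Y)$). An allocation is a partition $(G_1,\dots,G_k)$ of $G$; agents of $A_i$ get $u_a(G_i)$. It is EF2 for $a\in A_i$ if for every $i'$ there is $C\subseteq G_{i'}$ with $|C|\le 2$ and $u_a(G_i)\ge u_a(G_{i'}\setminus C)$. An allocation is $1/k$-democratic EF2 if for each $i$ at least $n_i/k$ agents of $A_i$ find it EF2. *)

theory Defs
  imports Complex_Main
begin

text \<open>Groups are indexed by i < k; agent j of group i (j < n i) has utility u i j.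
  An allocation is a partition (P 0, ..., P (k-1)) of the set of goods G (parts may be empty).\<close>

definition is_allocation :: "'g set \<Rightarrow> nat \<Rightarrow> (nat \<Rightarrow> 'g set) \<Rightarrow> bool" where
  "is_allocation G k P \<longleftrightarrow>
     (\<forall>i<k. \<forall>i'<k. i \<noteq> i' \<longrightarrow> P i \<inter> P i' = {}) \<and> (\<Union>i<k. P i) = G"

definition EF2 :: "('g set \<Rightarrow> real) \<Rightarrow> nat \<Rightarrow> (nat \<Rightarrow> 'g set) \<Rightarrow> nat \<Rightarrow> bool" where
  "EF2 v k P i \<longleftrightarrow>
     (\<forall>i'<k. \<exists>C. C \<subseteq> P i' \<and> card C \<le> 2 \<and> v (P i' - C) \<le> v (P i))"

definition democratic_EF2 ::
    "nat \<Rightarrow> (nat \<Rightarrow> nat) \<Rightarrow> (nat \<Rightarrow> nat \<Rightarrow> 'g set \<Rightarrow> real) \<Rightarrow> (nat \<Rightarrow> 'g set) \<Rightarrow> bool" where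
  "democratic_EF2 k n u P \<longleftrightarrow>
     (\<forall>i<k. real (card {j. j < n i \<and> EF2 (u i j) k P i}) \<ge> real (n i) / real k)"

end

theory Submission
  imports Defs "HOL-Analysis.Brouwer_Fixpoint"
begin

lemma pigeon_real:
  fixes f :: "nat \<Rightarrow> nat"
  assumes "finite J" "J \<noteq> {}" "card J \<le> k" "\<forall>a<M. f a \<in> J" "k > 0"
  shows "\<exists>j\<in>J. real (card {a. a<M \<and> f a = j}) \<ge> real M / real k"
proof (rule ccontr)
  assume H: "\<not> ?thesis"
  have U: "{..<M} = (\<Union>j\<in>J. {a. a<M \<and> f a = j})" using assms(4) by auto
  have "M = card (\<Union>j\<in>J. {a. a<M \<and> f a = j})" using U by (metis card_lessThan)
  also have "\<dots> = (\<Sum>j\<in>J. card {a. a<M \<and> f a = j})"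
    by (rule card_UN_disjoint) (use assms in auto)
  finally have "real M = (\<Sum>j\<in>J. real (card {a. a<M \<and> f a = j}))" by (metis of_nat_sum)
  also have "\<dots> < (\<Sum>j\<in>J. real M / real k)"
    by (rule sum_strict_mono) (use assms H in auto)
  also have "\<dots> = real (card J) * real M / real k" by simp
  also have "\<dots> \<le> real k * real M / real k"
    using assms by (intro divide_right_mono mult_right_mono) auto
  also have "\<dots> = real M" using assms by simp
  finally show False by simp
qed

lemma mod_inj_aux:
  fixes a t t' k :: nat
  assumes "(a + t) mod k = (a + t') mod k" "t < k" "t' < k"
  shows "t = t'"
proof -
  { fix t t' :: nat assume e: "(a + t) mod k = (a + t') mod k" and l: "t \<le> t'" "t' < k"
    then have "k dvd (a + t') - (a + t)" using mod_eq_dvd_iff_nat[of "a+t" "a+t'" k] by simp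
    then have "k dvd t' - t" by simp
    then have "t' - t = 0" using l nat_dvd_not_less[of "t'-t" k] by (cases "t' - t = 0") auto
    then have "t = t'" using l by simp }
  then show ?thesis using assms by (metis nat_le_linear)
qed

lemma arith_aux:
  fixes B1 B2 c1 c2 t :: nat
  assumes "B1 < 2*t+2" "2*t \<le> B2" "B1 \<le> c1" "c1 \<le> Suc B1" "B2 \<le> c2" "c2 \<le> Suc B2"
    "\<not> (c1 \<le> 2*t \<and> 2*t+2 \<le> c2)"
  shows "t = B1 div 2 \<or> t = B2 div 2"
  using assms by presburger

locale demo =
  fixes G :: "'g set" and k :: nat and n :: "nat \<Rightarrow> nat"
    and u :: "nat \<Rightarrow> nat \<Rightarrow> 'g set \<Rightarrow> real" and N :: nat and h :: "nat \<Rightarrow> 'g"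
  assumes k2: "k \<ge> 2" and Npos: "N \<ge> 1" and hbij: "bij_betw h {..<N} G"
    and umono: "\<And>i j X Y. i < k \<Longrightarrow> j < n i \<Longrightarrow> X \<subseteq> Y \<Longrightarrow> Y \<subseteq> G \<Longrightarrow> u i j X \<le> u i j Y"
begin

definition "pp = 2*N"
definition "d = k - 1"
definition ct :: "(nat\<Rightarrow>nat) \<Rightarrow> nat \<Rightarrow> nat" where
  "ct x j = (if j < k then Max (insert 0 (x ` {..<j})) else pp)"
definition inr where "inr x j = {t. t < N \<and> ct x j \<le> 2*t \<and> 2*t+2 \<le> ct x (Suc j)}"
definition NE where "NE x = {j. j < k \<and> ct x j < ct x (Suc j)}"
definition vl where "vl g a x j = u g a (h ` inr x j)"
definition fav where "fav g a x = (SOME j. j \<in> NE x \<and> (\<forall>m<k. vl g a x m \<le> vl g a x j))"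
definition owner where "owner x = (\<Sum>i<d. x i) mod k"
definition fans where "fans x j = {a. a < n (owner x) \<and> fav (owner x) a x = j}"
definition lbl where
  "lbl x = (SOME j. j \<in> NE x \<and> real (card (fans x j)) \<ge> real (n (owner x)) / real k)"
definition lab where "lab x j = (if lbl x \<le> j \<and> x j \<noteq> 0 then (1::nat) else 0)"

lemma pp_pos: "pp > 0" using Npos by (simp add: pp_def)
lemma k_pos: "k > 0" using k2 by simp
lemma kd: "k = Suc d" using k2 by (simp add: d_def)

lemma ct_le_p: assumes "\<forall>i. x i \<le> pp" shows "ct x j \<le> pp"
  unfolding ct_def using assms by (auto simp: Max_le_iff)

lemma ct_mono: assumes "\<forall>i. x i \<le> pp" "i \<le> j" shows "ct x i \<le> ct x j"
proof (cases "j < k")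
  case True
  then show ?thesis using assms unfolding ct_def
    by (auto intro!: Max_mono)
next
  case False
  then show ?thesis using ct_le_p[OF assms(1)] by (simp add: ct_def)
qed

lemma ct_ge: "i < j \<Longrightarrow> j < k \<Longrightarrow> x i \<le> ct x j"
  unfolding ct_def by (auto intro!: Max_ge)

lemma ct_0: "ct x 0 = 0" using k_pos by (simp add: ct_def)
lemma ct_k: "ct x k = pp" by (simp add: ct_def)

lemma ct_Suc: "Suc j < k \<Longrightarrow> ct x (Suc j) = max (ct x j) (x j)"
proof -
  assume a: "Suc j < k"
  have e: "insert 0 (x ` {..<Suc j}) = insert (x j) (insert 0 (x ` {..<j}))" by (auto simp: lessThan_Suc)
  have "Max (insert (x j) (insert 0 (x ` {..<j}))) = max (x j) (Max (insert 0 (x ` {..<j})))"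
    by (rule Max_insert) auto
  then show ?thesis using a unfolding ct_def e by (simp add: max.commute)
qed

lemma ct_between:
  assumes "\<forall>i. b i \<le> y i \<and> y i \<le> Suc (b i)"
  shows "ct b j \<le> ct y j \<and> ct y j \<le> Suc (ct b j)"
proof (cases "j < k")
  case True
  have 1: "Max (insert 0 (b ` {..<j})) \<le> Max (insert 0 (y ` {..<j}))"
  proof (rule Max.boundedI)
    fix e assume "e \<in> insert 0 (b ` {..<j})"
    then show "e \<le> Max (insert 0 (y ` {..<j}))"
      using assms by (auto intro: le_trans[OF _ Max_ge])
  qed auto
  have 2: "Max (insert 0 (y ` {..<j})) \<le> Suc (Max (insert 0 (b ` {..<j})))"
  proof (rule Max.boundedI)
    fix e assume "e \<in> insert 0 (y ` {..<j})"
    then show "e \<le> Suc (Max (insert 0 (b ` {..<j})))"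
      using assms by (auto intro: le_trans[OF _ Suc_le_mono[THEN iffD2, OF Max_ge]])
  qed auto
  show ?thesis using True 1 2 by (simp add: ct_def)
next
  case False
  then show ?thesis by (simp add: ct_def)
qed

lemma NE_ne: "NE x \<noteq> {}"
proof
  assume "NE x = {}"
  then have A: "\<forall>j<k. ct x (Suc j) \<le> ct x j" by (auto simp: NE_def)
  have "\<forall>j\<le>k. ct x j \<le> 0"
  proof (intro allI impI)
    fix j show "j \<le> k \<Longrightarrow> ct x j \<le> 0"
    proof (induction j)
      case 0 then show ?case by (simp add: ct_0)
    next
      case (Suc j) then show ?case using A by (metis Suc_le_eq le_trans less_imp_le)
    qed
  qed
  then show False using ct_k pp_pos by auto
qed

lemma NE_fin: "finite (NE x)" and NE_card: "card (NE x) \<le> k"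
proof -
  have "NE x \<subseteq> {..<k}" by (auto simp: NE_def)
  then show "finite (NE x)" "card (NE x) \<le> k"
    by (auto intro: finite_subset dest: card_mono[rotated])
qed

lemma inr_empty: "ct x (Suc j) \<le> ct x j \<Longrightarrow> inr x j = {}"
  by (auto simp: inr_def)

lemma inr_sub: "inr x j \<subseteq> {..<N}" by (auto simp: inr_def)

lemma hG: "h ` {..<N} = G" using hbij by (simp add: bij_betw_def)
lemma hinj: "inj_on h {..<N}" using hbij by (simp add: bij_betw_def)

lemma h_inr_G: "h ` inr x j \<subseteq> G" using inr_sub hG by blast

lemma fav_ex:
  assumes "g<k" "a < n g"
  shows "\<exists>j. j \<in> NE x \<and> (\<forall>m<k. vl g a x m \<le> vl g a x j)"
proof -
  let ?f = "vl g a x"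
  have "Max (?f ` NE x) \<in> ?f ` NE x" using NE_fin NE_ne by (intro Max_in) auto
  then obtain j where j: "j \<in> NE x" "?f j = Max (?f ` NE x)" by auto
  have "\<forall>m<k. ?f m \<le> ?f j"
  proof (intro allI impI)
    fix m assume "m < k"
    show "?f m \<le> ?f j"
    proof (cases "m \<in> NE x")
      case True then show ?thesis using j NE_fin by auto
    next
      case False
      then have "inr x m = {}" using \<open>m<k\<close> by (intro inr_empty) (auto simp: NE_def)
      then show ?thesis unfolding vl_def using umono[OF assms, of "{}" "h ` inr x j"] h_inr_G by auto
    qed
  qed
  then show ?thesis using j by blast
qed

lemma fav: "g<k \<Longrightarrow> a<n g \<Longrightarrow> fav g a x \<in> NE x \<and> (\<forall>m<k. vl g a x m \<le> vl g a x (fav g a x))"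
  unfolding fav_def by (rule someI_ex) (rule fav_ex)

lemma owner_lt: "owner x < k" using k_pos by (simp add: owner_def)

lemma lbl: "lbl x \<in> NE x \<and> real (card (fans x (lbl x))) \<ge> real (n (owner x)) / real k"
proof -
  have "\<exists>j\<in>NE x. real (card {a. a < n (owner x) \<and> fav (owner x) a x = j}) \<ge> real (n (owner x)) / real k"
    by (rule pigeon_real) (use NE_fin NE_ne NE_card fav owner_lt k_pos in auto)
  then show ?thesis unfolding lbl_def fans_def by (rule someI_ex[OF bexE]) blast
qed

lemma lbl_lt: "lbl x < k" using lbl[of x] by (simp add: NE_def)

lemma lab_p: assumes "\<forall>i. x i \<le> pp" "j < d" "x j = pp" shows "lab x j = 1"
proof -
  have "lbl x \<le> j"
  proof (rule ccontr)
    assume "\<not> lbl x \<le> j"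
    then have "Suc j \<le> lbl x" by simp
    have "pp \<le> ct x (Suc j)" using ct_ge[of j "Suc j" x] assms kd by simp
    also have "\<dots> \<le> ct x (lbl x)" by (rule ct_mono) (use assms \<open>Suc j \<le> lbl x\<close> in auto)
    finally have "pp \<le> ct x (lbl x)" .
    moreover have "ct x (Suc (lbl x)) \<le> pp" by (rule ct_le_p) (use assms in auto)
    moreover have "ct x (lbl x) < ct x (Suc (lbl x))" using lbl[of x] by (simp add: NE_def)
    ultimately show False by simp
  qed
  then show ?thesis using assms pp_pos by (simp add: lab_def)
qed

lemma lab_reduced: assumes "\<forall>i. x i \<le> pp" shows "reduced d (lab x) = lbl x"
proof (rule reduced_labelling_unique)
  show "lbl x \<le> d" using lbl_lt kd by (metis less_Suc_eq_le)
  show "\<forall>i<lbl x. lab x i = 0" by (simp add: lab_def)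
  show "lbl x = d \<or> lab x (lbl x) \<noteq> 0"
  proof (cases "lbl x < d")
    case True
    have "ct x (lbl x) < ct x (Suc (lbl x))" using lbl[of x] by (simp add: NE_def)
    moreover have "ct x (Suc (lbl x)) = max (ct x (lbl x)) (x (lbl x))"
      using True kd by (intro ct_Suc) simp
    ultimately have "x (lbl x) \<noteq> 0" by auto
    then show ?thesis by (simp add: lab_def)
  next
    case False then show ?thesis using lbl_lt[of x] kd by simp
  qed
qed


lemma sum_enum:
  assumes ks: "kuhn_simplex pp d base upd s" and t: "t \<le> d"
  shows "(\<Sum>i<d. kuhn_simplex.enum base upd t i) = (\<Sum>i<d. base i) + t"
proof -
  interpret K: kuhn_simplex pp d base upd s by (rule ks)
  let ?A = "upd ` {..<t}"
  have Asub: "?A \<subseteq> {..<d}" using K.upd_space t by auto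
  have cA: "card ?A = t"
    using K.inj_upd t by (subst card_image) (auto intro: inj_on_subset)
  have "(\<Sum>i<d. K.enum t i) = (\<Sum>i<d. base i + (if i \<in> ?A then 1 else 0))"
    by (intro sum.cong) (auto simp: K.enum_def)
  also have "\<dots> = (\<Sum>i<d. base i) + (\<Sum>i<d. (if i \<in> ?A then 1 else 0))"
    by (simp add: sum.distrib)
  also have "(\<Sum>i<d. (if i \<in> ?A then 1 else (0::nat))) = card ({..<d} \<inter> ?A)"
  proof -
    have "card ({..<d} \<inter> ?A) = (\<Sum>i\<in>{..<d} \<inter> ?A. 1)" by simp
    also have "\<dots> = (\<Sum>i<d. (if i \<in> ?A then 1 else (0::nat)))" by (rule sum.inter_restrict) simp
    finally show ?thesis by simp
  qed
  also have "{..<d} \<inter> ?A = ?A" using Asub by auto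
  finally show ?thesis using cA by simp
qed

theorem main: "\<exists>P. is_allocation G k P \<and> democratic_EF2 k n u P"
proof -
  have "odd (card {s. ksimplex pp d s \<and> (reduced d \<circ> lab) ` s = {..d}})"
    by (rule kuhn_combinatorial) (use pp_pos lab_p in \<open>auto simp: lab_def\<close>)
  then have "{s. ksimplex pp d s \<and> (reduced d \<circ> lab) ` s = {..d}} \<noteq> {}"
    by (rule odd_card_imp_not_empty)
  then obtain s where "ksimplex pp d s" and rl: "(reduced d \<circ> lab) ` s = {..d}" by auto
  then obtain base upd where ks: "kuhn_simplex pp d base upd s" by (auto elim: ksimplex.cases)
  interpret K: kuhn_simplex pp d base upd s by (rule ks)
  have yle: "\<And>y. y \<in> s \<Longrightarrow> \<forall>i. y i \<le> pp" using K.s_le_p by blast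
  have ybnd: "\<And>y. y \<in> s \<Longrightarrow> \<forall>i. base i \<le> y i \<and> y i \<le> Suc (base i)"
    using K.base_le K.le_Suc_base by blast
  have lbls: "lbl ` s = {..d}"
    using rl lab_reduced[OF yle] by (metis (no_types, lifting) comp_apply image_cong)
  have cards: "card s = k"
    using K.s_eq K.inj_enum kd by (simp add: card_image)
  have fins: "finite s" using cards k_pos by (metis card.infinite less_numeral_extra(3))
  have owner_inj: "inj_on owner s"
  proof (rule inj_onI)
    fix y y' assume y: "y \<in> s" and y': "y' \<in> s" and e: "owner y = owner y'"
    obtain t where t: "t \<le> d" "y = K.enum t" using y K.s_eq by auto
    obtain t' where t': "t' \<le> d" "y' = K.enum t'" using y' K.s_eq by auto
    have "((\<Sum>i<d. base i) + t) mod k = ((\<Sum>i<d. base i) + t') mod k"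
      using e t t' sum_enum[OF ks] by (simp add: owner_def)
    then have "t = t'" by (rule mod_inj_aux) (use t t' kd in auto)
    then show "y = y'" using t t' by simp
  qed
  have "card (lbl ` s) = card s" using lbls cards kd by simp
  then have lbl_inj: "inj_on lbl s" by (rule eq_card_imp_inj_on[OF fins])
  have os: "owner ` s \<subseteq> {..<k}" using owner_lt by auto
  have "card (owner ` s) = card {..<k}" using card_image[OF owner_inj] cards by simp
  then have owner_img: "owner ` s = {..<k}" by (intro card_subset_eq[OF finite_lessThan os])
  define yy where "yy g = (SOME y. y \<in> s \<and> owner y = g)" for g
  have yy: "yy g \<in> s \<and> owner (yy g) = g" if "g < k" for g
  proof -
    have "\<exists>y. y \<in> s \<and> owner y = g" using owner_img that by (metis imageE lessThan_iff)
    then show ?thesis unfolding yy_def by (rule someI_ex)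
  qed
  define \<beta> where "\<beta> j = ct base j" for j
  have cb: "\<beta> j \<le> ct y j \<and> ct y j \<le> Suc (\<beta> j)" if "y \<in> s" for y j
    unfolding \<beta>_def by (rule ct_between) (use ybnd that in auto)
  have disj: False if "y \<in> s" "z \<in> s" "j < j'" "t \<in> inr y j" "t \<in> inr z j'" for y z j j' t
  proof -
    have a: "2*t+2 \<le> ct y (Suc j)" "ct z j' \<le> 2*t" using that by (auto simp: inr_def)
    have "ct z (Suc j) \<le> ct z j'" by (rule ct_mono) (use yle that in auto)
    then show False using a cb[OF that(1), of "Suc j"] cb[OF that(2), of "Suc j"] by linarith
  qed
  define outer where "outer m = {t. t<N \<and> \<beta> m < 2*t+2 \<and> 2*t \<le> \<beta> (Suc m)}" for m
  have inr_outer: "inr y m \<subseteq> outer m" if "y \<in> s" for y m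
    using cb[OF that, of m] cb[OF that, of "Suc m"] by (auto simp: inr_def outer_def)
  have outer_cover: "\<exists>m<k. t \<in> outer m" if "t < N" for t
  proof -
    have b0: "\<beta> 0 = 0" by (simp add: \<beta>_def ct_0)
    have bk: "2*t+2 \<le> \<beta> k" using that by (simp add: \<beta>_def ct_k pp_def)
    define j where "j = (LEAST j. 2*t+2 \<le> \<beta> j)"
    have j1: "2*t+2 \<le> \<beta> j" unfolding j_def by (rule LeastI[of _ k]) (rule bk)
    have j2: "j \<le> k" unfolding j_def by (rule Least_le) (rule bk)
    have j0: "j \<noteq> 0"
    proof
      assume "j = 0" then show False using j1 b0 by simp
    qed
    have j3: "\<not> 2*t+2 \<le> \<beta> (j - 1)" unfolding j_def by (rule not_less_Least) (use j0 j_def in auto)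
    show ?thesis using j0 j1 j2 j3 that by (intro exI[of _ "j - 1"]) (auto simp: outer_def)
  qed
  have outer_diff: "card (outer m - inr y m) \<le> 2" if "y \<in> s" for y m
  proof -
    have "outer m - inr y m \<subseteq> {\<beta> m div 2, \<beta> (Suc m) div 2}"
    proof
      fix t assume t: "t \<in> outer m - inr y m"
      then have "\<beta> m < 2*t+2" "2*t \<le> \<beta> (Suc m)" "\<not> (ct y m \<le> 2*t \<and> 2*t+2 \<le> ct y (Suc m))"
        by (auto simp: outer_def inr_def)
      then have "t = \<beta> m div 2 \<or> t = \<beta> (Suc m) div 2"
        using cb[OF that, of m] cb[OF that, of "Suc m"] by (intro arith_aux) auto
      then show "t \<in> {\<beta> m div 2, \<beta> (Suc m) div 2}" by auto
    qed
    then have "card (outer m - inr y m) \<le> card {\<beta> m div 2, \<beta> (Suc m) div 2}"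
      by (rule card_mono[rotated]) auto
    also have "\<dots> \<le> 2" by (simp add: card_insert_if)
    finally show ?thesis .
  qed
  define asg where "asg t = (if \<exists>y\<in>s. t \<in> inr y (lbl y)
      then lbl (SOME y. y \<in> s \<and> t \<in> inr y (lbl y)) else (SOME m. m<k \<and> t \<in> outer m))" for t
  have asg_in: "asg t = lbl y" if "y \<in> s" "t \<in> inr y (lbl y)" for y t
  proof -
    have ex: "\<exists>y. y \<in> s \<and> t \<in> inr y (lbl y)" using that by blast
    define y' where "y' = (SOME y. y \<in> s \<and> t \<in> inr y (lbl y))"
    have y': "y' \<in> s" "t \<in> inr y' (lbl y')" using someI_ex[OF ex] unfolding y'_def by auto
    have "lbl y' = lbl y"
    proof (rule ccontr)
      assume "lbl y' \<noteq> lbl y"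
      then show False
        using disj[OF that(1) y'(1) _ that(2) y'(2)] disj[OF y'(1) that(1) _ y'(2) that(2)]
        by (metis linorder_neqE_nat)
    qed
    then show ?thesis using that unfolding asg_def y'_def by auto
  qed
  have asg_ok: "asg t < k \<and> t \<in> outer (asg t)" if "t < N" for t
  proof (cases "\<exists>y\<in>s. t \<in> inr y (lbl y)")
    case True
    then have ex: "\<exists>y. y \<in> s \<and> t \<in> inr y (lbl y)" by blast
    define y' where "y' = (SOME y. y \<in> s \<and> t \<in> inr y (lbl y))"
    have y': "y' \<in> s" "t \<in> inr y' (lbl y')" using someI_ex[OF ex] unfolding y'_def by auto
    have "asg t = lbl y'" using True unfolding asg_def y'_def by auto
    then show ?thesis using y' inr_outer lbl_lt by auto
  next
    case False
    then have "asg t = (SOME m. m<k \<and> t \<in> outer m)" unfolding asg_def by auto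
    then show ?thesis using someI_ex[OF outer_cover[OF that]] by auto
  qed
  define Q where "Q j = {t. t<N \<and> asg t = j}" for j
  define P where "P g = h ` Q (lbl (yy g))" for g
  have QN: "Q j \<subseteq> {..<N}" for j by (auto simp: Q_def)
  have Qout: "Q j \<subseteq> outer j" for j using asg_ok by (auto simp: Q_def)
  have PG: "P g \<subseteq> G" for g using QN hG unfolding P_def by blast
  have alloc: "is_allocation G k P"
    unfolding is_allocation_def
  proof (intro conjI allI impI)
    fix i i' assume i: "i < k" "i' < k" "i \<noteq> i'"
    have "yy i \<noteq> yy i'" using yy[OF i(1)] yy[OF i(2)] i(3) by metis
    then have "lbl (yy i) \<noteq> lbl (yy i')" using lbl_inj yy[OF i(1)] yy[OF i(2)] by (metis inj_onD)
    then have "Q (lbl (yy i)) \<inter> Q (lbl (yy i')) = {}" by (auto simp: Q_def)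
    then show "P i \<inter> P i' = {}" unfolding P_def
      using inj_on_image_Int[OF hinj QN QN] by (metis image_empty)
  next
    show "(\<Union>i<k. P i) = G"
    proof
      show "(\<Union>i<k. P i) \<subseteq> G" using PG by blast
      show "G \<subseteq> (\<Union>i<k. P i)"
      proof
        fix x assume "x \<in> G"
        then obtain t where t: "t < N" "x = h t" using hG by auto
        have "asg t \<in> {..d}" using asg_ok[OF t(1)] kd by auto
        then obtain w where w: "w \<in> s" "lbl w = asg t" using lbls by (metis imageE)
        define g where "g = owner w"
        have g: "g < k" using owner_lt by (simp add: g_def)
        have "yy g = w" using yy[OF g] w owner_inj by (metis g_def inj_onD)
        then have "x \<in> P g" using t w by (auto simp: P_def Q_def)
        then show "x \<in> (\<Union>i<k. P i)" using g by blast
      qed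
    qed
  qed
  have dem: "democratic_EF2 k n u P"
    unfolding democratic_EF2_def
  proof (intro allI impI)
    fix i assume i: "i < k"
    define y where "y = yy i"
    have y: "y \<in> s" "owner y = i" using yy[OF i] by (auto simp: y_def)
    have sub: "fans y (lbl y) \<subseteq> {j. j < n i \<and> EF2 (u i j) k P i}"
    proof
      fix a assume "a \<in> fans y (lbl y)"
      then have a: "a < n i" "fav i a y = lbl y" using y by (auto simp: fans_def)
      have favp: "\<forall>m<k. vl i a y m \<le> vl i a y (lbl y)" using fav[OF i a(1), of y] a(2) by simp
      have own: "u i a (h ` inr y (lbl y)) \<le> u i a (P i)"
      proof (rule umono[OF i a(1) _ PG])
        have "inr y (lbl y) \<subseteq> Q (lbl y)" using asg_in[OF y(1)] inr_sub by (auto simp: Q_def)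
        then show "h ` inr y (lbl y) \<subseteq> P i" by (auto simp: P_def y_def)
      qed
      have "EF2 (u i a) k P i"
        unfolding EF2_def
      proof (intro allI impI)
        fix i' assume i': "i' < k"
        define m where "m = lbl (yy i')"
        have m: "m < k" using lbl_lt by (simp add: m_def)
        define C where "C = h ` (Q m - inr y m)"
        have "C \<subseteq> P i'" by (auto simp: C_def P_def m_def)
        moreover have "card C \<le> 2"
        proof -
          have fo: "finite (outer m)" by (auto simp: outer_def)
          have "card C \<le> card (Q m - inr y m)" unfolding C_def by (rule card_image_le)
            (use finite_subset[OF Qout fo] in auto)
          also have "\<dots> \<le> card (outer m - inr y m)" by (rule card_mono) (use fo Qout in auto)
          also have "\<dots> \<le> 2" by (rule outer_diff[OF y(1)])
          finally show ?thesis .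
        qed
        moreover have "u i a (P i' - C) \<le> u i a (P i)"
        proof -
          have "P i' - C \<subseteq> h ` inr y m" by (auto simp: C_def P_def m_def)
          then have "u i a (P i' - C) \<le> u i a (h ` inr y m)"
            by (rule umono[OF i a(1) _ h_inr_G])
          also have "\<dots> \<le> u i a (h ` inr y (lbl y))" using favp m by (simp add: vl_def)
          also have "\<dots> \<le> u i a (P i)" by (rule own)
          finally show ?thesis .
        qed
        ultimately show "\<exists>C. C \<subseteq> P i' \<and> card C \<le> 2 \<and> u i a (P i' - C) \<le> u i a (P i)" by blast
      qed
      then show "a \<in> {j. j < n i \<and> EF2 (u i j) k P i}" using a by simp
    qed
    have "real (n i) / real k \<le> real (card (fans y (lbl y)))" using lbl[of y] y by simp
    also have "\<dots> \<le> real (card {j. j < n i \<and> EF2 (u i j) k P i})"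
      by (simp add: card_mono[OF _ sub])
    finally show "real (n i) / real k \<le> real (card {j. j < n i \<and> EF2 (u i j) k P i})" .
  qed
  show ?thesis using alloc dem by blast
qed

end

theorem mainTheorem16:
  fixes G :: "'g set" and k :: nat and n :: "nat \<Rightarrow> nat"
    and u :: "nat \<Rightarrow> nat \<Rightarrow> 'g set \<Rightarrow> real"
  assumes "finite G" and "k \<ge> 2"
    and "\<And>i. i < k \<Longrightarrow> n i \<ge> 1"
    and "\<And>i j X. i < k \<Longrightarrow> j < n i \<Longrightarrow> X \<subseteq> G \<Longrightarrow> u i j X \<ge> 0"
    and "\<And>i j X Y. i < k \<Longrightarrow> j < n i \<Longrightarrow> X \<subseteq> Y \<Longrightarrow> Y \<subseteq> G \<Longrightarrow> u i j X \<le> u i j Y"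
  shows "\<exists>P. is_allocation G k P \<and> democratic_EF2 k n u P"
proof (cases "G = {}")
  case True
  let ?P = "\<lambda>i::nat. {} :: 'g set"
  have "is_allocation G k ?P" using True by (simp add: is_allocation_def)
  moreover have "democratic_EF2 k n u ?P"
    unfolding democratic_EF2_def EF2_def
  proof (intro allI impI)
    fix i assume "i < k"
    have "{j. j < n i \<and> (\<forall>i'<k. \<exists>C\<subseteq>?P i'. card C \<le> 2 \<and> u i j (?P i' - C) \<le> u i j (?P i))} = {..<n i}"
      by auto
    moreover have "real (n i) / real k \<le> real (n i)"
      using assms(2) by (simp add: divide_le_eq mult_le_cancel_left1 mult_le_cancel_right1)
    ultimately show "real (n i) / real k \<le> real (card {j. j < n i \<and> (\<forall>i'<k. \<exists>C\<subseteq>?P i'. card C \<le> 2 \<and> u i j (?P i' - C) \<le> u i j (?P i))})"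
      by simp
  qed
  ultimately show ?thesis by blast
next
  case False
  obtain h where h: "bij_betw h {0..<card G} G" using ex_bij_betw_nat_finite[OF assms(1)] by blast
  have "card G \<ge> 1" using False assms(1) by (simp add: Suc_le_eq card_gt_0_iff)
  then interpret demo G k n u "card G" h
    using assms(2,5) h by unfold_locales (auto simp: atLeast0LessThan)
  show ?thesis by (rule main)
qed

end
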